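(* Let $A,B$ be invertible positive bounded linear operators on a complex Hilbert space with $0<A\leq B$. Then $$3(A-B)+BA^{-1}B-AB^{-1}A\geq 0.$$
   Context: An operator $X$ is positive ($X\ge0$) if it is self-adjoint and $\langle x, Xx\rangle\ge0$ for all vectors $x$; $X\le Y$ means $Y-X\ge0$, and $0<A$ means $A$ is positive and invertible. *)

theory Defs
  imports "HOL-Analysis.Analysis" "HOL-Library.Complex_Order"
begin

text \<open>Complex Hilbert spaces: a Banach space (over the reals, as in the library)
  carrying a compatible complex scalar multiplication and a complex inner product
  (conjugate-linear in the first argument, linear in the second) inducing the norm.\<close>

class complex_hilbert = banach +
  fixes scaleC :: "complex \<Rightarrow> 'a \<Rightarrow> 'a" (infixr "*\<^sub>C" 75)
    and cinner :: "'a \<Rightarrow> 'a \<Rightarrow> complex"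
  assumes scaleC_add_right: "scaleC a (x + y) = scaleC a x + scaleC a y"
    and scaleC_add_left: "scaleC (a + b) x = scaleC a x + scaleC b x"
    and scaleC_scaleC: "scaleC a (scaleC b x) = scaleC (a * b) x"
    and scaleC_one: "scaleC 1 x = x"
    and scaleR_scaleC: "scaleR r x = scaleC (complex_of_real r) x"
    and cinner_add_right: "cinner x (y + z) = cinner x y + cinner x z"
    and cinner_scaleC_right: "cinner x (scaleC a y) = a * cinner x y"
    and cinner_commute: "cinner y x = cnj (cinner x y)"
    and norm_cinner: "norm x = sqrt (Re (cinner x x))"

instantiation complex :: complex_hilbert
begin
definition scaleC_complex :: "complex \<Rightarrow> complex \<Rightarrow> complex" where "scaleC_complex a x = a * x"
definition cinner_complex :: "complex \<Rightarrow> complex \<Rightarrow> complex" where "cinner_complex x y = cnj x * y"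
instance
  by standard (auto simp: scaleC_complex_def cinner_complex_def algebra_simps scaleR_conv_of_real
      complex_norm_square[symmetric] cmod_def)
end

definition bounded_clinear :: "('a::complex_hilbert \<Rightarrow> 'a) \<Rightarrow> bool" where
  "bounded_clinear f \<longleftrightarrow> bounded_linear f \<and> (\<forall>c x. f (c *\<^sub>C x) = c *\<^sub>C f x)"

definition positive_op :: "('a::complex_hilbert \<Rightarrow> 'a) \<Rightarrow> bool" where
  "positive_op X \<longleftrightarrow> bounded_clinear X \<and> (\<forall>x y. cinner x (X y) = cinner (X x) y)
      \<and> (\<forall>x. 0 \<le> cinner x (X x))"

definition op_le :: "('a::complex_hilbert \<Rightarrow> 'a) \<Rightarrow> ('a \<Rightarrow> 'a) \<Rightarrow> bool" where
  "op_le X Y \<longleftrightarrow> positive_op (\<lambda>x. Y x - X x)"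

definition invertible_op :: "('a::complex_hilbert \<Rightarrow> 'a) \<Rightarrow> bool" where
  "invertible_op X \<longleftrightarrow> bounded_clinear X \<and>
     (\<exists>Y. bounded_clinear Y \<and> (\<forall>x. X (Y x) = x) \<and> (\<forall>x. Y (X x) = x))"

end

theory Submission
  imports Defs
begin

lemma cinner_add_left: "cinner (x + y) (z::'a::complex_hilbert) = cinner x z + cinner y z"
proof -
  have "cinner (x + y) z = cnj (cinner z (x + y))" by (rule cinner_commute)
  also have "\<dots> = cnj (cinner z x) + cnj (cinner z y)" by (simp only: cinner_add_right complex_cnj_add)
  also have "\<dots> = cinner x z + cinner y z" by (simp only: cinner_commute[of x z, symmetric] cinner_commute[of y z, symmetric])
  finally show ?thesis .
qed

lemma cinner_zero_right: "cinner x (0::'a::complex_hilbert) = 0"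
proof -
  have "cinner x (0 + 0) = cinner x 0 + cinner x (0::'a)" by (rule cinner_add_right)
  then show ?thesis by simp
qed

lemma cinner_minus_right: "cinner x (- (y::'a::complex_hilbert)) = - cinner x y"
proof -
  have "cinner x (y + - y) = cinner x y + cinner x (- y)" by (rule cinner_add_right)
  then have "cinner x y + cinner x (- y) = 0" by (simp add: cinner_zero_right)
  then show ?thesis by (rule minus_unique[symmetric])
qed

lemma cinner_diff_right: "cinner x (y - (z::'a::complex_hilbert)) = cinner x y - cinner x z"
  by (simp only: diff_conv_add_uminus cinner_add_right cinner_minus_right)

lemma cinner_diff_left: "cinner (x - y) (z::'a::complex_hilbert) = cinner x z - cinner y z"
proof -
  have "cinner (x - y) z = cnj (cinner z (x - y))" by (rule cinner_commute)
  also have "\<dots> = cnj (cinner z x) - cnj (cinner z y)" by (simp only: cinner_diff_right complex_cnj_diff)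
  also have "\<dots> = cinner x z - cinner y z" by (simp only: cinner_commute[of x z, symmetric] cinner_commute[of y z, symmetric])
  finally show ?thesis .
qed

lemma inv_eq:
  fixes A :: "'a::complex_hilbert \<Rightarrow> 'a"
  assumes "invertible_op A"
  obtains Y where "bounded_clinear Y" "\<And>x. A (Y x) = x" "\<And>x. Y (A x) = x" "inv A = Y"
proof -
  from assms obtain Y where Y: "bounded_clinear Y" "\<forall>x. A (Y x) = x" "\<forall>x. Y (A x) = x"
    unfolding invertible_op_def by blast
  have "inv A = Y"
    by (rule ext) (metis Y(2,3) inv_f_f injI)
  with Y that show ?thesis by blast
qed

lemma real_nonneg_cnj: "0 \<le> (z::complex) \<Longrightarrow> cnj z = z"
  by (simp add: less_eq_complex_def complex_eq_iff)

lemma inv_mono: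
  fixes A B Ai Bi :: "'a::complex_hilbert \<Rightarrow> 'a"
  assumes pA: "positive_op A" and pB: "positive_op B" and le: "op_le A B"
    and Ai: "\<And>x. A (Ai x) = x" and Bi: "\<And>x. B (Bi x) = x"
  shows "cinner y (Bi y) \<le> cinner y (Ai y)"
proof -
  define w where "w = Ai y"
  define z where "z = Bi y"
  have linA: "bounded_linear A" using pA unfolding positive_op_def bounded_clinear_def by blast
  have saA: "\<And>x y. cinner x (A y) = cinner (A x) y" using pA unfolding positive_op_def by blast
  have saB: "\<And>x y. cinner x (B y) = cinner (B x) y" using pB unfolding positive_op_def by blast
  have posA: "\<And>x. 0 \<le> cinner x (A x)" using pA unfolding positive_op_def by blast
  have posB: "\<And>x. 0 \<le> cinner x (B x)" using pB unfolding positive_op_def by blast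
  have posD: "\<And>x. 0 \<le> cinner x (B x - A x)" using le unfolding op_le_def positive_op_def by blast
  have Aw: "A w = y" using Ai w_def by simp
  have Bz: "B z = y" using Bi z_def by simp
  have yw: "cinner y w = cinner w (A w)" using saA Aw by metis
  have yz: "cinner y z = cinner z (B z)" using saB Bz by metis
  have wy: "cinner w y = cinner y w"
    by (metis Aw cinner_commute posA real_nonneg_cnj yw)
  have zy: "cinner z y = cinner y z"
    by (metis Bz cinner_commute posB real_nonneg_cnj yz)
  have wAz: "cinner w (A z) = cinner y z" using saA Aw by metis
  have "A (w - z) = y - A z" using Aw linear_diff[OF bounded_linear.linear[OF linA]] by metis
  hence e1: "cinner (w - z) (A (w - z)) = cinner y w - 2 * cinner y z + cinner z (A z)"
    by (simp add: cinner_diff_left cinner_diff_right wy zy wAz)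
  have e2: "cinner z (B z - A z) = cinner y z - cinner z (A z)"
    by (simp add: cinner_diff_right Bz zy)
  have "0 \<le> cinner (w - z) (A (w - z)) + cinner z (B z - A z)"
    using posA posD by (simp add: add_nonneg_nonneg)
  also have "\<dots> = cinner y w - cinner y z" using e1 e2 by simp
  finally show ?thesis unfolding w_def z_def by (simp add: less_eq_complex_def)
qed

theorem mainTheorem9:
  fixes A B :: "'a::complex_hilbert \<Rightarrow> 'a"
  assumes "positive_op A" and "invertible_op A"
    and "positive_op B" and "invertible_op B"
    and "op_le A B"
  shows "positive_op (\<lambda>x. 3 *\<^sub>C (A x - B x) + B (inv A (B x)) - A (inv B (A x)))"
proof -
  obtain Ai where Ai: "bounded_clinear Ai" "\<And>x. A (Ai x) = x" "\<And>x. Ai (A x) = x" "inv A = Ai"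
    using inv_eq[OF assms(2)] by blast
  obtain Bi where Bi: "bounded_clinear Bi" "\<And>x. B (Bi x) = x" "\<And>x. Bi (B x) = x" "inv B = Bi"
    using inv_eq[OF assms(4)] by blast
  have cA: "bounded_clinear A" and cB: "bounded_clinear B"
    using assms(1,3) unfolding positive_op_def by blast+
  have lA: "linear A" "linear B" "linear Ai" "linear Bi"
    using cA cB Ai(1) Bi(1) unfolding bounded_clinear_def by (auto dest: bounded_linear.linear)
  have blA: "bounded_linear A" "bounded_linear B" "bounded_linear Ai" "bounded_linear Bi"
    using cA cB Ai(1) Bi(1) unfolding bounded_clinear_def by auto
  have sA: "\<And>c x. A (c *\<^sub>C x) = c *\<^sub>C A x" "\<And>c x. B (c *\<^sub>C x) = c *\<^sub>C B x"
    "\<And>c x. Ai (c *\<^sub>C x) = c *\<^sub>C Ai x" "\<And>c x. Bi (c *\<^sub>C x) = c *\<^sub>C Bi x"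
    using cA cB Ai(1) Bi(1) unfolding bounded_clinear_def by auto
  define D where "D x = B x - A x" for x
  define P where "P x = Ai x - Bi x" for x
  have lD: "linear D" unfolding D_def using lA by (intro linear_compose_sub) auto
  have blD: "bounded_linear D" unfolding D_def using blA by (intro bounded_linear_sub) auto
  have blP: "bounded_linear P" unfolding P_def using blA by (intro bounded_linear_sub) auto
  have three: "3 *\<^sub>C v = v + v + v" for v :: 'a
  proof -
    have "(3::complex) = 1 + 1 + 1" by simp
    then show ?thesis by (metis scaleC_add_left scaleC_one)
  qed
  have E: "3 *\<^sub>C (A x - B x) + B (Ai (B x)) - A (Bi (A x)) = D (P (D x))" for x
  proof -
    have "B (Ai (B x)) = B (Ai (A x + D x))" by (simp add: D_def)
    also have "\<dots> = B x + B (Ai (D x))" using lA by (simp add: linear_add Ai)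
    also have "\<dots> = B x + D (Ai (D x)) + D x" by (simp add: D_def Ai)
    finally have 1: "B (Ai (B x)) = B x + D (Ai (D x)) + D x" .
    have "A (Bi (A x)) = A (Bi (B x - D x))" by (simp add: D_def)
    also have "\<dots> = A x - A (Bi (D x))" using lA by (simp add: linear_diff Bi)
    also have "\<dots> = A x - D x + D (Bi (D x))" by (simp add: D_def Bi)
    finally have 2: "A (Bi (A x)) = A x - D x + D (Bi (D x))" .
    have 3: "D (P (D x)) = D (Ai (D x)) - D (Bi (D x))"
      using lD by (simp add: P_def linear_diff)
    show ?thesis unfolding 1 2 3 three by (simp add: D_def algebra_simps)
  qed
  have fun_eq: "(\<lambda>x. 3 *\<^sub>C (A x - B x) + B (inv A (B x)) - A (inv B (A x))) = (\<lambda>x. D (P (D x)))"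
    using E Ai(4) Bi(4) by auto
  have sD: "D (c *\<^sub>C x) = c *\<^sub>C D x" for c x
  proof -
    have "c *\<^sub>C (u - v) = c *\<^sub>C u - c *\<^sub>C v" for u v :: 'a
      by (metis add_diff_cancel diff_add_cancel scaleC_add_right)
    then show ?thesis by (simp add: D_def sA)
  qed
  have sP: "P (c *\<^sub>C x) = c *\<^sub>C P x" for c x
  proof -
    have "c *\<^sub>C (u - v) = c *\<^sub>C u - c *\<^sub>C v" for u v :: 'a
      by (metis add_diff_cancel diff_add_cancel scaleC_add_right)
    then show ?thesis by (simp add: P_def sA)
  qed
  have saA: "\<And>x y. cinner x (A y) = cinner (A x) y" using assms(1) unfolding positive_op_def by blast
  have saB: "\<And>x y. cinner x (B y) = cinner (B x) y" using assms(3) unfolding positive_op_def by blast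
  have saD: "cinner x (D y) = cinner (D x) y" for x y
    by (simp add: D_def cinner_diff_left cinner_diff_right saA saB)
  have saAi: "cinner x (Ai y) = cinner (Ai x) y" for x y
    by (metis Ai(2) saA)
  have saBi: "cinner x (Bi y) = cinner (Bi x) y" for x y
    by (metis Bi(2) saB)
  have saP: "cinner x (P y) = cinner (P x) y" for x y
    by (simp add: P_def cinner_diff_left cinner_diff_right saAi saBi)
  have pos: "0 \<le> cinner x (D (P (D x)))" for x
  proof -
    have "cinner x (D (P (D x))) = cinner (D x) (Ai (D x)) - cinner (D x) (Bi (D x))"
      by (simp add: saD P_def cinner_diff_right)
    moreover have "cinner (D x) (Bi (D x)) \<le> cinner (D x) (Ai (D x))"
      by (rule inv_mono[OF assms(1,3,5) Ai(2) Bi(2)])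
    ultimately show ?thesis by (simp add: less_eq_complex_def)
  qed
  show ?thesis unfolding fun_eq positive_op_def bounded_clinear_def
    using blD blP pos sD sP saD saP
    by (auto intro: bounded_linear_compose)
qed

end
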